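(* Let $d\ge1$, $\sigma>0$, and let $A_0,A_1\in\mathbb{R}^{d\times d}$ be constant matrices. Let $G:[0,\infty)\to\mathbb{R}^{d\times d}$ be continuous with $A_1G(\vartheta)=G(\vartheta)A_1$ for all $\vartheta\ge0$, and let $\Psi:[-\sigma,0]\to\mathbb{R}^{d\times d}$ be differentiable with $A_1\Psi(\vartheta)=\Psi(\vartheta)A_1$ for all $\vartheta\in[-\sigma,0]$. Let $G^*(\vartheta)=G(0)$ for $\vartheta\in[-\sigma,0)$ and $G^*(\vartheta)=G(\vartheta)$ for $\vartheta\ge0$, and let $Z$ be the function defined in the context. Then the solution of \[ \dot X(\vartheta)=A_0X(\vartheta-\sigma)+X(\vartheta-\sigma)A_1+G(\vartheta),\ \ \vartheta\ge0,\qquad X(\vartheta)=\Psi(\vartheta),\ \ \vartheta\in[-\sigma,0], \] is given by \[ X(\vartheta)=Z(\vartheta)\Psi(-\sigma)+\int_{-\sigma}^{0}Z(\vartheta-\sigma-s)\dot\Psi(s)\,ds+\int_0^{\vartheta}Z(\vartheta-\sigma-s)G^*(s)\,ds,\qquad\vartheta\in[-\sigma,\infty). \]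
   Context: $\Theta$ and $I$ denote the $d\times d$ zero and identity matrices. Define matrices $Q_{r+1}(r\sigma)$, $r=0,1,2,\dots$, recursively by $Q_1(0)=I$ and $Q_{r+1}(r\sigma)=A_0Q_r((r-1)\sigma)+Q_r((r-1)\sigma)A_1$ for $r\ge 1$. Define $Z:\mathbb{R}\to\mathbb{R}^{d\times d}$ by $Z(\vartheta)=\Theta$ for $\vartheta<-\sigma$, and, for each integer $u\ge 0$ and $\vartheta\in[(u-1)\sigma,u\sigma)$, \[ Z(\vartheta)=\sum_{r=0}^{u}Q_{r+1}(r\sigma)\frac{(\vartheta-(r-1)\sigma)^r}{r!}. \] *)

theory Defs
  imports "HOL-Analysis.Analysis"
begin

text \<open>d x d real matrices are rendered as real^'d^'d (d = CARD('d) >= 1).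
  Qmat A0 A1 r is the matrix Q_{r+1}(r sigma) of the paper:
  Q_1(0) = I, Q_{r+1}(r sigma) = A0 Q_r((r-1) sigma) + Q_r((r-1) sigma) A1.\<close>

fun Qmat :: "real^'d^'d \<Rightarrow> real^'d^'d \<Rightarrow> nat \<Rightarrow> real^'d^'d" where
  "Qmat A0 A1 0 = mat 1"
| "Qmat A0 A1 (Suc r) = A0 ** Qmat A0 A1 r + Qmat A0 A1 r ** A1"

text \<open>Z(theta) = 0 for theta < -sigma; for theta in [(u-1) sigma, u sigma), u >= 0,
  Z(theta) = sum_{r=0}^u Q_{r+1}(r sigma) (theta - (r-1) sigma)^r / r!.
  The index u is floor(theta/sigma) + 1.\<close>

definition Zmat :: "real^'d^'d \<Rightarrow> real^'d^'d \<Rightarrow> real \<Rightarrow> real \<Rightarrow> real^'d^'d" where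
  "Zmat A0 A1 \<sigma> t =
     (if t < - \<sigma> then 0
      else (\<Sum>r = 0..nat (\<lfloor>t / \<sigma>\<rfloor> + 1).
              ((t - (real r - 1) * \<sigma>) ^ r / fact r) *\<^sub>R Qmat A0 A1 r))"

definition dde_solution ::
  "real^'d^'d \<Rightarrow> real^'d^'d \<Rightarrow> real \<Rightarrow> (real \<Rightarrow> real^'d^'d) \<Rightarrow> (real \<Rightarrow> real^'d^'d)
    \<Rightarrow> (real \<Rightarrow> real^'d^'d) \<Rightarrow> bool" where
  "dde_solution A0 A1 \<sigma> G \<Psi> X \<longleftrightarrow>
     (\<forall>t\<in>{-\<sigma>..0}. X t = \<Psi> t) \<and>
     (\<forall>t\<ge>0. (X has_vector_derivative
                   (A0 ** X (t - \<sigma>) + X (t - \<sigma>) ** A1 + G t)) (at t within {0..}))"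

end

theory Submission
  imports Defs
begin


lemma bl1: "bounded_linear (\<lambda>M::real^'n^'m. (A::real^'m^'k) ** M)"
  unfolding linear_conv_bounded_linear[symmetric]
  by (rule linearI) (auto simp: matrix_matrix_mult_def vec_eq_iff sum.distrib sum_distrib_left algebra_simps)
lemma bl2: "bounded_linear (\<lambda>M::real^'n^'m. M ** (A::real^'k^'n))"
  unfolding linear_conv_bounded_linear[symmetric]
  by (rule linearI) (auto simp: matrix_matrix_mult_def vec_eq_iff sum.distrib sum_distrib_left algebra_simps)

lemma mat_rdistrib: "((A::real^'n^'m) + B) ** (C::real^'k^'n) = A ** C + B ** C"
  by (auto simp: matrix_matrix_mult_def vec_eq_iff sum.distrib algebra_simps)

definition Lop :: "real^'d^'d \<Rightarrow> real^'d^'d \<Rightarrow> real^'d^'d \<Rightarrow> real^'d^'d" where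
  "Lop A0 A1 M = A0 ** M + M ** A1"

definition pp :: "nat \<Rightarrow> real \<Rightarrow> real" where
  "pp r x = (if 0 \<le> x then x ^ r / fact r else 0)"

definition pd :: "nat \<Rightarrow> real \<Rightarrow> real" where
  "pd r x = (if r = 0 then 0 else pp (r - 1) x)"

definition Eop :: "real^'d^'d \<Rightarrow> real^'d^'d \<Rightarrow> real \<Rightarrow> nat \<Rightarrow> real \<Rightarrow> real^'d^'d \<Rightarrow> real^'d^'d" where
  "Eop A0 A1 \<sigma> N y M = (\<Sum>r<N. pp r (y - (real r - 1) * \<sigma>) *\<^sub>R (Lop A0 A1 ^^ r) M)"

lemma Lop_bl: "bounded_linear (Lop A0 A1)"
  unfolding Lop_def by (intro bounded_linear_add bl1 bl2)

lemma Lpow_bl: "bounded_linear (Lop A0 A1 ^^ r)"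
proof (induction r)
  case 0 then show ?case by (simp add: id_def bounded_linear_ident)
next
  case (Suc r) then show ?case
    by (simp add: bounded_linear_compose[OF Lop_bl])
qed

lemma Q_comm:
  assumes "A1 ** M = M ** A1"
  shows "Qmat A0 A1 r ** M = (Lop A0 A1 ^^ r) M"
proof (induction r)
  case 0 then show ?case by simp
next
  case (Suc r)
  have "Qmat A0 A1 (Suc r) ** M = A0 ** (Qmat A0 A1 r ** M) + (Qmat A0 A1 r ** M) ** A1"
    by (simp add: mat_rdistrib matrix_mul_assoc[symmetric] assms)
  then show ?case using Suc by (simp add: Lop_def)
qed

lemma pp_neg: "x < 0 \<Longrightarrow> pp r x = 0" by (simp add: pp_def)

lemma E_neg:
  assumes "\<sigma> > 0" "y < - \<sigma>"
  shows "Eop A0 A1 \<sigma> N y M = 0"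
proof -
  have "pp r (y - (real r - 1) * \<sigma>) = 0" for r
  proof -
    have "(real r) * \<sigma> \<ge> 0" using assms by simp
    moreover have "y - (real r - 1) * \<sigma> = (y + \<sigma>) - real r * \<sigma>" by (simp add: algebra_simps)
    ultimately show ?thesis using assms by (intro pp_neg) linarith
  qed
  then show ?thesis by (simp add: Eop_def)
qed

lemma E_at:
  assumes "\<sigma> > 0" "N \<ge> 1"
  shows "Eop A0 A1 \<sigma> N (-\<sigma>) M = M"
proof -
  have "pp r (- \<sigma> - (real r - 1) * \<sigma>) *\<^sub>R (Lop A0 A1 ^^ r) M = (if r = 0 then M else 0)" for r
  proof (cases r)
    case 0 then show ?thesis by (simp add: pp_def)
  next
    case (Suc k)
    have "- \<sigma> - (real r - 1) * \<sigma> = - (real r * \<sigma>)" by (simp add: algebra_simps)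
    moreover have "real r * \<sigma> > 0" using Suc assms by simp
    ultimately show ?thesis using Suc by (simp add: pp_neg)
  qed
  then show ?thesis using assms unfolding Eop_def by (simp add: sum.delta')
qed

lemma E4alg:
  assumes "\<sigma> > 0" "y < (real N - 1) * \<sigma>"
  shows "(\<Sum>r<N. pd r (y - (real r - 1) * \<sigma>) *\<^sub>R (Lop A0 A1 ^^ r) M)
         = Eop A0 A1 \<sigma> N (y - \<sigma>) (Lop A0 A1 M)"
proof (cases N)
  case 0 then show ?thesis by (simp add: Eop_def)
next
  case (Suc n)
  have last: "pp n (y - \<sigma> - (real n - 1) * \<sigma>) = 0"
    using assms Suc by (intro pp_neg) (simp add: algebra_simps)
  have "(\<Sum>r<N. pd r (y - (real r - 1) * \<sigma>) *\<^sub>R (Lop A0 A1 ^^ r) M)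
     = (\<Sum>r<n. pp r (y - real r * \<sigma>) *\<^sub>R (Lop A0 A1 ^^ Suc r) M)"
    unfolding Suc sum.lessThan_Suc_shift by (simp add: pd_def algebra_simps)
  also have "\<dots> = (\<Sum>r<n. pp r (y - \<sigma> - (real r - 1) * \<sigma>) *\<^sub>R (Lop A0 A1 ^^ r) (Lop A0 A1 M))"
    by (intro sum.cong refl) (simp add: algebra_simps funpow_Suc_right del: funpow.simps)
  also have "\<dots> = Eop A0 A1 \<sigma> N (y - \<sigma>) (Lop A0 A1 M)"
    unfolding Eop_def Suc sum.lessThan_Suc using last by simp
  finally show ?thesis .
qed

lemma pp_deriv:
  assumes "x \<noteq> 0"
  shows "(pp r has_real_derivative pd r x) (at x)"
proof (cases "x > 0")
  case True
  have d: "((\<lambda>x. x ^ r / fact r) has_real_derivative pd r x) (at x)"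
  proof (cases r)
    case 0 then show ?thesis by (auto simp: pd_def intro!: derivative_eq_intros)
  next
    case (Suc k)
    have "((\<lambda>x. x ^ Suc k / fact (Suc k)) has_real_derivative (real (Suc k) * x ^ k / fact (Suc k))) (at x)"
      using DERIV_cdivide[OF DERIV_pow[of "Suc k" x], of "fact (Suc k)"] by simp
    moreover have "real (Suc k) * x ^ k / fact (Suc k) = pd r x"
      using True Suc by (simp add: pd_def pp_def fact_Suc del: of_nat_Suc)
    ultimately show ?thesis using Suc by simp
  qed
  show ?thesis
    by (rule has_field_derivative_transform_within_open[OF d, of "{0<..}"])
       (use True in \<open>auto simp: pp_def\<close>)
next
  case False
  then have "x < 0" using assms by simp
  have d: "((\<lambda>x. 0) has_real_derivative pd r x) (at x)"
    using \<open>x < 0\<close> by (auto simp: pd_def pp_def intro!: derivative_eq_intros)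
  show ?thesis
    by (rule has_field_derivative_transform_within_open[OF d, of "{..<0}"])
       (use \<open>x < 0\<close> in \<open>auto simp: pp_def\<close>)
qed

lemma pp_cont: "r \<ge> 1 \<Longrightarrow> continuous_on UNIV (pp r)"
proof -
  assume "r \<ge> 1"
  then have "pp r = (\<lambda>x. (max x 0) ^ r / fact r)"
    by (auto simp: pp_def fun_eq_iff max_def)
  then show ?thesis by (auto intro!: continuous_intros)
qed



lemma mat_zero_l: "(0::real^'n^'m) ** (M::real^'k^'n) = 0"
  by (simp add: matrix_matrix_mult_def vec_eq_iff)

lemma mat_sum_r: "(\<Sum>i\<in>I. f i) ** (M::real^'k^'n) = (\<Sum>i\<in>I. (f i :: real^'n^'m) ** M)"
  by (induction I rule: infinite_finite_induct) (auto simp: mat_rdistrib mat_zero_l)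

lemma mat_scale_r: "(a *\<^sub>R (X::real^'n^'m)) ** (M::real^'k^'n) = a *\<^sub>R (X ** M)"
  by (simp add: matrix_matrix_mult_def vec_eq_iff sum_distrib_left algebra_simps)

lemma Zmat_E:
  assumes sp: "\<sigma> > 0" and yN: "y < (real N - 1) * \<sigma>" and cm: "A1 ** M = M ** A1"
  shows "Zmat A0 A1 \<sigma> y ** M = Eop A0 A1 \<sigma> N y M"
proof (cases "y < - \<sigma>")
  case True
  then show ?thesis using E_neg[OF sp True] by (simp add: Zmat_def)
next
  case False
  define K where "K = nat (\<lfloor>y / \<sigma>\<rfloor> + 1)"
  have yk: "- 1 \<le> y / \<sigma>" using False sp by (simp add: field_simps)
  have fl: "real_of_int \<lfloor>y / \<sigma>\<rfloor> \<le> y / \<sigma>" "y / \<sigma> < real_of_int \<lfloor>y / \<sigma>\<rfloor> + 1" by linarith+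
  have Kge: "\<lfloor>y / \<sigma>\<rfloor> + 1 \<ge> 0" using yk by linarith
  then have Kr: "real K = real_of_int \<lfloor>y / \<sigma>\<rfloor> + 1" unfolding K_def by simp
  have yN': "y / \<sigma> < real N - 1" using yN sp by (simp add: field_simps)
  have KN: "K < N" using Kr fl yN' by linarith
  have low: "0 \<le> y - (real r - 1) * \<sigma>" if "r \<le> K" for r
  proof -
    have "real r - 1 \<le> y / \<sigma>" using that Kr fl by linarith
    then have "(real r - 1) * \<sigma> \<le> y" using sp by (simp add: field_simps)
    then show ?thesis by simp
  qed
  have high: "y - (real r - 1) * \<sigma> < 0" if "K < r" for r
  proof -
    have "real r \<ge> real K + 1" using that by simp
    then have "y / \<sigma> < real r - 1" using Kr fl by linarith
    then have "y < (real r - 1) * \<sigma>" using sp by (simp add: field_simps)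
    then show ?thesis by simp
  qed
  have "Zmat A0 A1 \<sigma> y ** M = (\<Sum>r = 0..K. ((y - (real r - 1) * \<sigma>) ^ r / fact r) *\<^sub>R Qmat A0 A1 r) ** M"
    using False by (simp add: Zmat_def K_def)
  also have "\<dots> = (\<Sum>r = 0..K. ((y - (real r - 1) * \<sigma>) ^ r / fact r) *\<^sub>R (Qmat A0 A1 r ** M))"
    by (simp add: mat_sum_r mat_scale_r)
  also have "\<dots> = (\<Sum>r = 0..K. pp r (y - (real r - 1) * \<sigma>) *\<^sub>R (Lop A0 A1 ^^ r) M)"
  proof (intro sum.cong refl)
    fix r assume "r \<in> {0..K}"
    then have "0 \<le> y - (real r - 1) * \<sigma>" using low by simp
    then show "((y - (real r - 1) * \<sigma>) ^ r / fact r) *\<^sub>R (Qmat A0 A1 r ** M) =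
      pp r (y - (real r - 1) * \<sigma>) *\<^sub>R (Lop A0 A1 ^^ r) M"
      unfolding pp_def Q_comm[OF cm] by simp
  qed
  also have "\<dots> = Eop A0 A1 \<sigma> N y M"
    unfolding Eop_def
    by (rule sum.mono_neutral_left) (use KN high in \<open>auto simp: pp_neg\<close>)
  finally show ?thesis .
qed

lemma Zmat_I:
  assumes sp: "\<sigma> > 0" and "- \<sigma> \<le> y" "y \<le> 0"
  shows "Zmat A0 A1 \<sigma> y = mat 1"
proof (cases "y = 0")
  case True
  then show ?thesis using sp by (simp add: Zmat_def)
next
  case False
  then have "y < 0" using assms by simp
  have "- 1 \<le> y / \<sigma>" "y / \<sigma> < 0" using assms \<open>y < 0\<close> by (simp_all add: field_simps)
  then have "\<lfloor>y / \<sigma>\<rfloor> = -1" by linarith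
  then show ?thesis using assms by (simp add: Zmat_def)
qed

lemma E_cont:
  assumes sp: "\<sigma> > 0" and F: "continuous_on S F" and c: "\<And>s. s \<in> S \<Longrightarrow> - \<sigma> \<le> c - s"
  shows "continuous_on S (\<lambda>s. Eop A0 A1 \<sigma> N (c - s) (F s))"
  unfolding Eop_def
proof (intro continuous_on_sum continuous_on_scaleR)
  fix r assume "r \<in> {..<N}"
  show "continuous_on S (\<lambda>s. (Lop A0 A1 ^^ r) (F s))"
    by (rule bounded_linear.continuous_on[OF Lpow_bl F])
  show "continuous_on S (\<lambda>s. pp r (c - s - (real r - 1) * \<sigma>))"
  proof (cases r)
    case 0
      have c': "0 \<le> c - s + \<sigma>" if "s \<in> S" for s using c[OF that] by linarith
    show ?thesis
      by (rule continuous_on_eq[OF continuous_on_const[of S 1]]) (use 0 c' in \<open>auto simp: pp_def\<close>)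
  next
    case (Suc k)
    show ?thesis
      by (rule continuous_on_compose2[OF pp_cont[of r]]) (use Suc in \<open>auto intro!: continuous_intros\<close>)
  qed
qed

lemma E_deriv:
  assumes sp: "\<sigma> > 0" and F: "(F has_vector_derivative F') (at s)"
    and nz: "\<And>r. r < N \<Longrightarrow> c - s - (real r - 1) * \<sigma> \<noteq> 0"
    and cN: "c - s < (real N - 1) * \<sigma>"
  shows "((\<lambda>s. Eop A0 A1 \<sigma> N (c - s) (F s)) has_vector_derivative
           (Eop A0 A1 \<sigma> N (c - s) F' - Eop A0 A1 \<sigma> N (c - s - \<sigma>) (Lop A0 A1 (F s)))) (at s)"
proof -
  have each: "((\<lambda>s. pp r (c - s - (real r - 1) * \<sigma>) *\<^sub>R (Lop A0 A1 ^^ r) (F s)) has_vector_derivative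
      (pp r (c - s - (real r - 1) * \<sigma>) *\<^sub>R (Lop A0 A1 ^^ r) F'
       + (- pd r (c - s - (real r - 1) * \<sigma>)) *\<^sub>R (Lop A0 A1 ^^ r) (F s))) (at s)"
    if "r \<in> {..<N}" for r
  proof (rule has_vector_derivative_scaleR)
    have "((\<lambda>s. c - s - (real r - 1) * \<sigma>) has_real_derivative -1) (at s)"
      by (auto intro!: derivative_eq_intros)
    from DERIV_chain2[OF pp_deriv[OF nz] this] that
    show "((\<lambda>s. pp r (c - s - (real r - 1) * \<sigma>)) has_real_derivative - pd r (c - s - (real r - 1) * \<sigma>)) (at s)"
      by simp
    show "((\<lambda>s. (Lop A0 A1 ^^ r) (F s)) has_vector_derivative (Lop A0 A1 ^^ r) F') (at s)"
      by (rule bounded_linear.has_vector_derivative[OF Lpow_bl F])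
  qed
  have "((\<lambda>s. Eop A0 A1 \<sigma> N (c - s) (F s)) has_vector_derivative
      (\<Sum>r<N. pp r (c - s - (real r - 1) * \<sigma>) *\<^sub>R (Lop A0 A1 ^^ r) F'
       + (- pd r (c - s - (real r - 1) * \<sigma>)) *\<^sub>R (Lop A0 A1 ^^ r) (F s))) (at s)"
    unfolding Eop_def by (rule has_vector_derivative_sum) (rule each)
  moreover have "(\<Sum>r<N. pp r (c - s - (real r - 1) * \<sigma>) *\<^sub>R (Lop A0 A1 ^^ r) F'
       + (- pd r (c - s - (real r - 1) * \<sigma>)) *\<^sub>R (Lop A0 A1 ^^ r) (F s))
     = Eop A0 A1 \<sigma> N (c - s) F' - (\<Sum>r<N. pd r (c - s - (real r - 1) * \<sigma>) *\<^sub>R (Lop A0 A1 ^^ r) (F s))"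
    by (simp add: sum_subtractf Eop_def)
  moreover have "(\<Sum>r<N. pd r (c - s - (real r - 1) * \<sigma>) *\<^sub>R (Lop A0 A1 ^^ r) (F s))
      = Eop A0 A1 \<sigma> N (c - s - \<sigma>) (Lop A0 A1 (F s))"
    by (rule E4alg[OF sp cN])
  ultimately show ?thesis by simp
qed



lemma E_add: "Eop A0 A1 \<sigma> N y (M1 + M2) = Eop A0 A1 \<sigma> N y M1 + Eop A0 A1 \<sigma> N y M2"
  unfolding Eop_def
  by (simp add: linear_add[OF bounded_linear.linear[OF Lpow_bl]] scaleR_add_right sum.distrib)

context
  fixes A0 A1 :: "real^'d^'d" and \<sigma> :: real and G \<Psi> \<Psi>' :: "real \<Rightarrow> real^'d^'d"
  assumes sp: "\<sigma> > 0"
    and Gc: "continuous_on {0..} G"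
    and GA: "\<And>t. t \<ge> 0 \<Longrightarrow> A1 ** G t = G t ** A1"
    and Pd: "\<And>t. t \<in> {-\<sigma>..0} \<Longrightarrow> (\<Psi> has_vector_derivative \<Psi>' t) (at t within {-\<sigma>..0})"
    and PA: "\<And>t. t \<in> {-\<sigma>..0} \<Longrightarrow> A1 ** \<Psi> t = \<Psi> t ** A1"
begin

lemma Psi'_comm:
  assumes s: "s \<in> {-\<sigma>..0}"
  shows "A1 ** \<Psi>' s = \<Psi>' s ** A1"
proof -
  have d1: "((\<lambda>s. A1 ** \<Psi> s) has_vector_derivative A1 ** \<Psi>' s) (at s within {-\<sigma>..0})"
    by (rule bounded_linear.has_vector_derivative[OF bl1 Pd[OF s]])
  have d2: "((\<lambda>s. \<Psi> s ** A1) has_vector_derivative \<Psi>' s ** A1) (at s within {-\<sigma>..0})"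
    by (rule bounded_linear.has_vector_derivative[OF bl2 Pd[OF s]])
  have d2': "((\<lambda>s. A1 ** \<Psi> s) has_vector_derivative \<Psi>' s ** A1) (at s within {-\<sigma>..0})"
    by (rule has_vector_derivative_transform_within[OF d2, of 1]) (use s PA in auto)
  show ?thesis
    by (rule vector_derivative_unique_within_closed_interval[of "-\<sigma>" 0 s]) (use sp s d1 d2' in auto)
qed

lemma Psi_cont: "continuous_on {-\<sigma>..0} \<Psi>"
  using Pd has_vector_derivative_continuous continuous_on_eq_continuous_within by blast

lemma X_cont:
  assumes sol: "dde_solution A0 A1 \<sigma> G \<Psi> X"
  shows "continuous_on {-\<sigma>..} X"
proof -
  have "continuous_on {-\<sigma>..0} X"
    by (rule continuous_on_eq[OF Psi_cont]) (use sol in \<open>auto simp: dde_solution_def\<close>)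
  moreover have "continuous_on {0..} X"
    unfolding continuous_on_eq_continuous_within
  proof
    fix x :: real assume "x \<in> {0..}"
    then have "(X has_vector_derivative (A0 ** X (x - \<sigma>) + X (x - \<sigma>) ** A1 + G x)) (at x within {0..})"
      using sol by (simp add: dde_solution_def)
    then show "continuous (at x within {0..}) X" by (rule has_vector_derivative_continuous)
  qed
  ultimately have "continuous_on ({-\<sigma>..0} \<union> {0..}) X"
    by (intro continuous_on_closed_Un) auto
  moreover have "{-\<sigma>..0} \<union> {0..} = {-\<sigma>::real..}" using sp by auto
  ultimately show ?thesis by simp
qed

lemma forward_neg:
  assumes sol: "dde_solution A0 A1 \<sigma> G \<Psi> X" and t: "-\<sigma> \<le> t" "t \<le> 0"
  shows "X t = Zmat A0 A1 \<sigma> t ** \<Psi> (-\<sigma>)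
              + integral {-\<sigma>..0} (\<lambda>s. Zmat A0 A1 \<sigma> (t - \<sigma> - s) ** \<Psi>' s)
              + integral {0..t} (\<lambda>s. Zmat A0 A1 \<sigma> (t - \<sigma> - s) ** (if s < 0 then G 0 else G s))"
proof -
  have Xt: "X t = \<Psi> t" using sol t by (auto simp: dde_solution_def)
  have Z1: "Zmat A0 A1 \<sigma> t = mat 1" using Zmat_I[OF sp t] .
  have I0: "integral {0..t} (\<lambda>s. Zmat A0 A1 \<sigma> (t - \<sigma> - s) ** (if s < 0 then G 0 else G s)) = 0"
  proof -
    have "(if t = 0 then t - 0 else 0) = (0::real)" by simp
    then show ?thesis using integral_null[of 0 t] t by (simp add: content_real_eq_0)
  qed
  have ftc: "(\<Psi>' has_integral (\<Psi> t - \<Psi> (-\<sigma>))) {-\<sigma>..t}"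
  proof (rule fundamental_theorem_of_calculus)
    show "- \<sigma> \<le> t" using t by simp
    fix x assume "x \<in> {-\<sigma>..t}"
    then have "x \<in> {-\<sigma>..0}" using t by auto
    from Pd[OF this] show "(\<Psi> has_vector_derivative \<Psi>' x) (at x within {- \<sigma>..t})"
      by (rule has_vector_derivative_within_subset) (use t in auto)
  qed
  have f1: "((\<lambda>s. Zmat A0 A1 \<sigma> (t - \<sigma> - s) ** \<Psi>' s) has_integral (\<Psi> t - \<Psi> (-\<sigma>))) {-\<sigma>..t}"
  proof (rule has_integral_spike_finite[OF _ _ ftc, of "{}"])
    fix x assume "x \<in> {-\<sigma>..t} - {}"
    then have "Zmat A0 A1 \<sigma> (t - \<sigma> - x) = mat 1" using t by (intro Zmat_I[OF sp]) auto
    then show "Zmat A0 A1 \<sigma> (t - \<sigma> - x) ** \<Psi>' x = \<Psi>' x" by simp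
  qed simp
  have f2: "((\<lambda>s. Zmat A0 A1 \<sigma> (t - \<sigma> - s) ** \<Psi>' s) has_integral 0) {t..0}"
  proof (rule has_integral_spike_finite[OF _ _ has_integral_0, of "{t}"])
    fix x assume "x \<in> {t..0} - {t}"
    then have "t - \<sigma> - x < - \<sigma>" by auto
    then show "Zmat A0 A1 \<sigma> (t - \<sigma> - x) ** \<Psi>' x = 0" by (simp add: Zmat_def mat_zero_l)
  qed simp
  have "((\<lambda>s. Zmat A0 A1 \<sigma> (t - \<sigma> - s) ** \<Psi>' s) has_integral (\<Psi> t - \<Psi> (-\<sigma>) + 0)) {-\<sigma>..0}"
    by (rule has_integral_combine[OF _ _ f1 f2]) (use t in auto)
  then have I1: "integral {-\<sigma>..0} (\<lambda>s. Zmat A0 A1 \<sigma> (t - \<sigma> - s) ** \<Psi>' s) = \<Psi> t - \<Psi> (-\<sigma>)"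
    by (simp add: integral_unique)
  show ?thesis using Xt Z1 I0 I1 by simp
qed

lemma forward_pos:
  assumes sol: "dde_solution A0 A1 \<sigma> G \<Psi> X" and t: "0 < t"
  shows "X t = Zmat A0 A1 \<sigma> t ** \<Psi> (-\<sigma>)
              + integral {-\<sigma>..0} (\<lambda>s. Zmat A0 A1 \<sigma> (t - \<sigma> - s) ** \<Psi>' s)
              + integral {0..t} (\<lambda>s. Zmat A0 A1 \<sigma> (t - \<sigma> - s) ** (if s < 0 then G 0 else G s))"
proof -
  define N where "N = nat \<lceil>t / \<sigma>\<rceil> + 2"
  have tN: "t < (real N - 1) * \<sigma>"
  proof -
    have "t / \<sigma> \<le> real_of_int \<lceil>t / \<sigma>\<rceil>" by linarith
    moreover have "t / \<sigma> > 0" using t sp by simp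
    then have "\<lceil>t / \<sigma>\<rceil> \<ge> 0" by linarith
    ultimately have "t / \<sigma> < real N - 1" unfolding N_def by linarith
    then show ?thesis using sp by (simp add: field_simps)
  qed
  have N1: "N \<ge> 1" unfolding N_def by simp
  define E where "E = Eop A0 A1 \<sigma> N"
  define L where "L = Lop A0 A1"
  define D where "D s = (if s \<le> 0 then \<Psi>' s else L (X (s - \<sigma>)) + G s)" for s
  define Sx where "Sx = insert 0 ((\<lambda>r. t - \<sigma> - (real r - 1) * \<sigma>) ` {..<N})"
  have Xc: "continuous_on {-\<sigma>..} X" by (rule X_cont[OF sol])
  have ftc: "((\<lambda>s. E (t - \<sigma> - s) (D s) - E (t - \<sigma> - s - \<sigma>) (L (X s))) has_integral
              (E (t - \<sigma> - t) (X t) - E (t - \<sigma> - (-\<sigma>)) (X (-\<sigma>)))) {-\<sigma>..t}"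
  proof (rule fundamental_theorem_of_calculus_interior_strong[of Sx])
    show "finite Sx" unfolding Sx_def by simp
    show "- \<sigma> \<le> t" using t sp by simp
    show "continuous_on {- \<sigma>..t} (\<lambda>s. E (t - \<sigma> - s) (X s))"
      unfolding E_def
      by (rule E_cont[OF sp continuous_on_subset[OF Xc]]) auto
  next
    fix s assume s: "s \<in> {- \<sigma><..<t} - Sx"
    have XD: "(X has_vector_derivative D s) (at s)"
    proof (cases "s < 0")
      case True
      have "(\<Psi> has_vector_derivative \<Psi>' s) (at s within {-\<sigma>..0})" using Pd s True by auto
      then have "(\<Psi> has_vector_derivative \<Psi>' s) (at s)"
        using at_within_interior[of s "{-\<sigma>..0}"] s True by auto
      then have "(X has_vector_derivative \<Psi>' s) (at s)"
        by (rule has_vector_derivative_transform_within_open[of _ _ _ "{-\<sigma><..<0}"])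
           (use s True sol in \<open>auto simp: dde_solution_def\<close>)
      then show ?thesis using True by (simp add: D_def)
    next
      case False
      then have "s > 0" using s unfolding Sx_def by auto
      have "(X has_vector_derivative (A0 ** X (s - \<sigma>) + X (s - \<sigma>) ** A1 + G s)) (at s within {0..})"
        using sol \<open>s > 0\<close> by (simp add: dde_solution_def)
      then have "(X has_vector_derivative (A0 ** X (s - \<sigma>) + X (s - \<sigma>) ** A1 + G s)) (at s)"
        using at_within_interior[of s "{0..}"] \<open>s > 0\<close> by auto
      then show ?thesis using \<open>s > 0\<close> by (simp add: D_def L_def Lop_def)
    qed
    have nz: "t - \<sigma> - s - (real r - 1) * \<sigma> \<noteq> 0" if "r < N" for r
    proof
      assume "t - \<sigma> - s - (real r - 1) * \<sigma> = 0"
      then have "s = t - \<sigma> - (real r - 1) * \<sigma>" by simp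
      then have "s \<in> Sx" unfolding Sx_def using that by auto
      then show False using s by simp
    qed
    have cN: "t - \<sigma> - s < (real N - 1) * \<sigma>" using s tN by auto
    show "((\<lambda>s. E (t - \<sigma> - s) (X s)) has_vector_derivative
           E (t - \<sigma> - s) (D s) - E (t - \<sigma> - s - \<sigma>) (L (X s))) (at s)"
      unfolding E_def L_def by (rule E_deriv[OF sp XD nz cN])
  qed
  have phit: "E (t - \<sigma> - t) (X t) = X t" unfolding E_def using E_at[OF sp N1] by simp
  have P0: "X (-\<sigma>) = \<Psi> (-\<sigma>)" using sol sp by (simp add: dde_solution_def)
  define g where "g s = E (t - \<sigma> - s) (L (X (s - \<sigma>)))" for s
  define J where "J = integral {0..t} g"
  have gc: "continuous_on {0..t} g"
    unfolding g_def E_def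
  proof (rule E_cont[OF sp])
    have "continuous_on {0..t} (\<lambda>s. X (s - \<sigma>))"
      by (rule continuous_on_compose2[OF Xc]) (auto intro!: continuous_intros)
    then show "continuous_on {0..t} (\<lambda>s. L (X (s - \<sigma>)))"
      unfolding L_def by (rule bounded_linear.continuous_on[OF Lop_bl])
  qed auto
  have gint: "(g has_integral J) {0..t}"
    unfolding J_def using integrable_continuous_interval[OF gc] by (rule integrable_integral)
  have h1a: "((\<lambda>s. E (t - \<sigma> - s - \<sigma>) (L (X s))) has_integral J) {-\<sigma>..t - \<sigma>}"
  proof -
    from has_integral_shift_real_ivl[OF gint, of \<sigma>]
    have "((\<lambda>x. g (x + \<sigma>)) has_integral J) {0 - \<sigma>..t - \<sigma>}" .
    moreover have "(\<lambda>x. g (x + \<sigma>)) = (\<lambda>s. E (t - \<sigma> - s - \<sigma>) (L (X s)))"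
      unfolding g_def by (simp add: fun_eq_iff algebra_simps)
    ultimately show ?thesis by simp
  qed
  have h1b: "((\<lambda>s. E (t - \<sigma> - s - \<sigma>) (L (X s))) has_integral 0) {t - \<sigma>..t}"
  proof (rule has_integral_spike_finite[OF _ _ has_integral_0, of "{t - \<sigma>}"])
    fix x assume "x \<in> {t - \<sigma>..t} - {t - \<sigma>}"
    then have "t - \<sigma> - x - \<sigma> < - \<sigma>" by auto
    then show "E (t - \<sigma> - x - \<sigma>) (L (X x)) = 0" unfolding E_def by (rule E_neg[OF sp])
  qed simp
  have h1: "((\<lambda>s. E (t - \<sigma> - s - \<sigma>) (L (X s))) has_integral J) {-\<sigma>..t}"
    using has_integral_combine[OF _ _ h1a h1b] t sp by simp
  have tot: "((\<lambda>s. E (t - \<sigma> - s) (D s)) has_integral (X t - E t (\<Psi> (-\<sigma>)) + J)) {-\<sigma>..t}"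
    using has_integral_add[OF ftc h1] phit P0 by simp
  have intD: "(\<lambda>s. E (t - \<sigma> - s) (D s)) integrable_on {-\<sigma>..t}" using tot by blast
  have comb: "integral {-\<sigma>..0} (\<lambda>s. E (t - \<sigma> - s) (D s)) + integral {0..t} (\<lambda>s. E (t - \<sigma> - s) (D s))
      = X t - E t (\<Psi> (-\<sigma>)) + J"
    using Henstock_Kurzweil_Integration.integral_combine[OF _ _ intD, of 0] t sp integral_unique[OF tot] by simp
  define g2 where "g2 s = E (t - \<sigma> - s) (G s)" for s
  define IG where "IG = integral {0..t} g2"
  have g2c: "continuous_on {0..t} g2"
    unfolding g2_def E_def
    by (rule E_cont[OF sp continuous_on_subset[OF Gc]]) auto
  have g2int: "(g2 has_integral IG) {0..t}"
    unfolding IG_def using integrable_continuous_interval[OF g2c] by (rule integrable_integral)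
  have posD: "((\<lambda>s. E (t - \<sigma> - s) (D s)) has_integral (J + IG)) {0..t}"
  proof (rule has_integral_spike_finite[OF _ _ has_integral_add[OF gint g2int], of "{0}"])
    fix x assume "x \<in> {0..t} - {0}"
    then have "x > 0" by auto
    then show "E (t - \<sigma> - x) (D x) = g x + g2 x"
      unfolding D_def g_def g2_def E_def by (simp add: E_add)
  qed simp
  have negD: "integral {-\<sigma>..0} (\<lambda>s. E (t - \<sigma> - s) (D s)) = integral {-\<sigma>..0} (\<lambda>s. E (t - \<sigma> - s) (\<Psi>' s))"
    by (rule integral_cong) (simp add: D_def)
  have key: "integral {-\<sigma>..0} (\<lambda>s. E (t - \<sigma> - s) (\<Psi>' s)) = X t - E t (\<Psi> (-\<sigma>)) - IG"
    using comb negD integral_unique[OF posD] by (simp add: algebra_simps)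
  have Z1: "Zmat A0 A1 \<sigma> t ** \<Psi> (-\<sigma>) = E t (\<Psi> (-\<sigma>))"
    unfolding E_def by (rule Zmat_E[OF sp tN PA]) (use sp in auto)
  have Z2: "integral {-\<sigma>..0} (\<lambda>s. Zmat A0 A1 \<sigma> (t - \<sigma> - s) ** \<Psi>' s)
      = integral {-\<sigma>..0} (\<lambda>s. E (t - \<sigma> - s) (\<Psi>' s))"
  proof (rule integral_cong)
    fix s assume s: "s \<in> {-\<sigma>..0}"
    have "t - \<sigma> - s < (real N - 1) * \<sigma>" using s tN by auto
    then show "Zmat A0 A1 \<sigma> (t - \<sigma> - s) ** \<Psi>' s = E (t - \<sigma> - s) (\<Psi>' s)"
      unfolding E_def by (rule Zmat_E[OF sp _ Psi'_comm[OF s]])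
  qed
  have Z3: "integral {0..t} (\<lambda>s. Zmat A0 A1 \<sigma> (t - \<sigma> - s) ** (if s < 0 then G 0 else G s)) = IG"
    unfolding IG_def
  proof (rule integral_cong)
    fix s assume s: "s \<in> {0..t}"
    have "t - \<sigma> - s < (real N - 1) * \<sigma>" using s tN sp by auto
    then show "Zmat A0 A1 \<sigma> (t - \<sigma> - s) ** (if s < 0 then G 0 else G s) = g2 s"
      unfolding g2_def E_def using s by (simp add: Zmat_E[OF sp _ GA])
  qed
  show ?thesis using Z1 Z2 Z3 key by simp
qed

end


lemma int_deriv0:
  fixes f :: "real \<Rightarrow> 'a::banach"
  assumes fc: "continuous_on {0..} f" and t: "0 \<le> t"
  shows "((\<lambda>u. integral {0..u} f) has_vector_derivative f t) (at t within {0..})"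
proof -
  have "((\<lambda>u. integral {0..u} f) has_vector_derivative f t) (at t within {0..t+1})"
    by (rule integral_has_vector_derivative) (use t in \<open>auto intro: continuous_on_subset[OF fc]\<close>)
  moreover have "at t within {0..t+1} = at t within {0..}"
    by (rule at_within_nhd[of _ "{..<t+1}"]) auto
  ultimately show ?thesis by simp
qed

context
  fixes A0 A1 :: "real^'d^'d" and \<sigma> :: real and G \<Psi> \<Psi>' :: "real \<Rightarrow> real^'d^'d"
  assumes sp: "\<sigma> > 0"
    and Gc: "continuous_on {0..} G"
    and GA: "\<And>t. t \<ge> 0 \<Longrightarrow> A1 ** G t = G t ** A1"
    and Pd: "\<And>t. t \<in> {-\<sigma>..0} \<Longrightarrow> (\<Psi> has_vector_derivative \<Psi>' t) (at t within {-\<sigma>..0})"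
    and PA: "\<And>t. t \<in> {-\<sigma>..0} \<Longrightarrow> A1 ** \<Psi> t = \<Psi> t ** A1"
begin

lemma exists_sol: "\<exists>X. dde_solution A0 A1 \<sigma> G \<Psi> X"
proof -
  have Pc: "continuous_on {-\<sigma>..0} \<Psi>" by (rule Psi_cont[OF sp Gc GA Pd PA])
  define L where "L = Lop A0 A1"
  define F where "F X t = (if t \<le> 0 then \<Psi> (max (-\<sigma>) t)
                           else \<Psi> 0 + integral {0..t} (\<lambda>s. L (X (s - \<sigma>)) + G s))"
    for X :: "real \<Rightarrow> real^'d^'d" and t
  define S where "S n = (F ^^ n) (\<lambda>t. \<Psi> (max (-\<sigma>) (min t 0)))" for n
  have Fd: "(F X has_vector_derivative (L (X (t - \<sigma>)) + G t)) (at t within {0..})"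
    if Xc: "continuous_on UNIV X" and t: "0 \<le> t" for X t
  proof -
    have fc: "continuous_on {0..} (\<lambda>s. L (X (s - \<sigma>)) + G s)"
    proof (intro continuous_on_add Gc)
      have "continuous_on {0..} (\<lambda>s. X (s - \<sigma>))"
        by (rule continuous_on_compose2[OF Xc]) (auto intro!: continuous_intros)
      then show "continuous_on {0..} (\<lambda>s. L (X (s - \<sigma>)))"
        unfolding L_def by (rule bounded_linear.continuous_on[OF Lop_bl])
    qed
    have "((\<lambda>u. \<Psi> 0 + integral {0..u} (\<lambda>s. L (X (s - \<sigma>)) + G s)) has_vector_derivative
            (L (X (t - \<sigma>)) + G t)) (at t within {0..})"
      using has_vector_derivative_add[OF has_vector_derivative_const int_deriv0[OF fc t]] by simp
    then show ?thesis
      by (rule has_vector_derivative_transform_within[of _ _ _ _ 1]) (use t sp in \<open>auto simp: F_def\<close>)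
  qed
  have Fc: "continuous_on UNIV (F X)" if Xc: "continuous_on UNIV X" for X
  proof -
    have "continuous_on {..0} (F X)"
    proof (rule continuous_on_eq)
      show "continuous_on {..0} (\<lambda>t. \<Psi> (max (-\<sigma>) t))"
        by (rule continuous_on_compose2[OF Pc]) (use sp in \<open>auto intro!: continuous_intros\<close>)
    qed (auto simp: F_def)
    moreover have "continuous_on {0..} (F X)"
      unfolding continuous_on_eq_continuous_within
      using Fd[OF Xc] has_vector_derivative_continuous by blast
    ultimately have "continuous_on ({..0} \<union> {0..}) (F X)"
      by (intro continuous_on_closed_Un) auto
    moreover have "{..0} \<union> {0..} = (UNIV :: real set)" by auto
    ultimately show ?thesis by simp
  qed
  have Sc: "continuous_on UNIV (S n)" for n
  proof (induction n)
    case 0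
    show ?case unfolding S_def
      by (simp, rule continuous_on_compose2[OF Pc]) (use sp in \<open>auto intro!: continuous_intros\<close>)
  next
    case (Suc n)
    then show ?case unfolding S_def by (simp add: Fc)
  qed
  have stab1: "\<forall>t. t \<le> real n * \<sigma> \<longrightarrow> S (Suc n) t = S n t" for n
  proof (induction n)
    case 0
    show ?case by (auto simp: S_def F_def)
  next
    case (Suc n)
    show ?case
    proof (intro allI impI)
      fix t assume t: "t \<le> real (Suc n) * \<sigma>"
      have "integral {0..t} (\<lambda>s. L (S (Suc n) (s - \<sigma>)) + G s) = integral {0..t} (\<lambda>s. L (S n (s - \<sigma>)) + G s)"
      proof (rule integral_cong)
        fix s assume "s \<in> {0..t}"
        then have "s - \<sigma> \<le> real n * \<sigma>" using t by (auto simp: algebra_simps)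
        then show "L (S (Suc n) (s - \<sigma>)) + G s = L (S n (s - \<sigma>)) + G s" using Suc by simp
      qed
      then show "S (Suc (Suc n)) t = S (Suc n) t"
        unfolding S_def by (simp add: F_def)
    qed
  qed
  have stab: "S m t = S n t" if "n \<le> m" "t \<le> real n * \<sigma>" for n m t
    using that(1)
  proof (induction m rule: dec_induct)
    case base then show ?case by simp
  next
    case (step m)
    have "real n * \<sigma> \<le> real m * \<sigma>" using step(1) sp by (simp add: mult_right_mono)
    then have "t \<le> real m * \<sigma>" using that(2) by linarith
    then show ?case using stab1 step by simp
  qed
  define k where "k t = nat \<lceil>t / \<sigma>\<rceil>" for t
  have kt: "t \<le> real (k t) * \<sigma>" for t
  proof -
    have "t / \<sigma> \<le> real (k t)" unfolding k_def by linarith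
    then show ?thesis using sp by (simp add: field_simps)
  qed
  define X where "X t = S (k t) t" for t
  have XS: "X t = S m t" if "k t \<le> m" for t m
    unfolding X_def using stab[OF that kt] by simp
  have init: "X t = \<Psi> t" if "t \<in> {-\<sigma>..0}" for t
  proof -
    have "k t = 0" using that sp unfolding k_def by (simp add: divide_nonpos_pos)
    then show ?thesis using that unfolding X_def S_def by simp
  qed
  have der: "(X has_vector_derivative (A0 ** X (t - \<sigma>) + X (t - \<sigma>) ** A1 + G t)) (at t within {0..})"
    if t: "0 \<le> t" for t
  proof -
    have d: "(S (Suc (k t)) has_vector_derivative (L (S (k t) (t - \<sigma>)) + G t)) (at t within {0..})"
      unfolding S_def using Fd[OF Sc[unfolded S_def] t] by simp
    have "k (t - \<sigma>) \<le> k t" unfolding k_def using sp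
      by (intro nat_mono ceiling_mono) (simp add: divide_right_mono)
    then have "X (t - \<sigma>) = S (k t) (t - \<sigma>)" by (rule XS)
    then have d': "(S (Suc (k t)) has_vector_derivative (A0 ** X (t - \<sigma>) + X (t - \<sigma>) ** A1 + G t)) (at t within {0..})"
      using d by (simp add: L_def Lop_def)
    show ?thesis
    proof (rule has_vector_derivative_transform_within[OF d' sp])
      show "t \<in> {0..}" using t by simp
      fix u assume u: "u \<in> {0..}" "dist u t < \<sigma>"
      have "u < t + \<sigma>" using u by (auto simp: dist_real_def)
      then have "u / \<sigma> < t / \<sigma> + 1" using sp by (simp add: field_simps)
      then have "\<lceil>u / \<sigma>\<rceil> \<le> \<lceil>t / \<sigma>\<rceil> + 1" by linarith
      then have "k u \<le> Suc (k t)" unfolding k_def by linarith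
      then show "S (Suc (k t)) u = X u" using XS by simp
    qed
  qed
  have "dde_solution A0 A1 \<sigma> G \<Psi> X" unfolding dde_solution_def using init der by blast
  then show ?thesis by blast
qed

end

theorem theorem7:
  fixes A0 A1 :: "real^'d^'d" and \<sigma> :: real
    and G \<Psi> \<Psi>' :: "real \<Rightarrow> real^'d^'d"
  assumes "\<sigma> > 0"
    and "continuous_on {0..} G"
    and "\<And>t. t \<ge> 0 \<Longrightarrow> A1 ** G t = G t ** A1"
    and "\<And>t. t \<in> {-\<sigma>..0} \<Longrightarrow> (\<Psi> has_vector_derivative \<Psi>' t) (at t within {-\<sigma>..0})"
    and "\<And>t. t \<in> {-\<sigma>..0} \<Longrightarrow> A1 ** \<Psi> t = \<Psi> t ** A1"
  shows "let Gs = (\<lambda>t. if t < 0 then G 0 else G t) in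
         \<forall>X. dde_solution A0 A1 \<sigma> G \<Psi> X \<longleftrightarrow>
           (\<forall>t\<ge>-\<sigma>. X t =
              Zmat A0 A1 \<sigma> t ** \<Psi> (-\<sigma>)
              + integral {-\<sigma>..0} (\<lambda>s. Zmat A0 A1 \<sigma> (t - \<sigma> - s) ** \<Psi>' s)
              + integral {0..t} (\<lambda>s. Zmat A0 A1 \<sigma> (t - \<sigma> - s) ** Gs s))"
  unfolding Let_def
proof (intro allI)
  fix X
  define R where "R t = Zmat A0 A1 \<sigma> t ** \<Psi> (-\<sigma>)
              + integral {-\<sigma>..0} (\<lambda>s. Zmat A0 A1 \<sigma> (t - \<sigma> - s) ** \<Psi>' s)
              + integral {0..t} (\<lambda>s. Zmat A0 A1 \<sigma> (t - \<sigma> - s) ** (if s < 0 then G 0 else G s))" for t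
  have fwd: "Y t = R t" if sol: "dde_solution A0 A1 \<sigma> G \<Psi> Y" and t: "-\<sigma> \<le> t" for Y t
  proof (cases "t \<le> 0")
    case True
    then show ?thesis unfolding R_def using forward_neg[OF assms sol t True] by simp
  next
    case False
    then show ?thesis unfolding R_def using forward_pos[OF assms sol] by simp
  qed
  show "dde_solution A0 A1 \<sigma> G \<Psi> X \<longleftrightarrow> (\<forall>t\<ge>-\<sigma>. X t = R t)"
    unfolding R_def[symmetric]
  proof
    assume "dde_solution A0 A1 \<sigma> G \<Psi> X"
    then show "\<forall>t\<ge>-\<sigma>. X t = R t" using fwd by blast
  next
    assume H: "\<forall>t\<ge>-\<sigma>. X t = R t"
    obtain S where S: "dde_solution A0 A1 \<sigma> G \<Psi> S" using exists_sol[OF assms] by blast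
    have XS: "X t = S t" if "-\<sigma> \<le> t" for t using H fwd[OF S that] that by simp
    have init: "X t = \<Psi> t" if "t \<in> {-\<sigma>..0}" for t
      using XS[of t] S that by (auto simp: dde_solution_def)
    have der: "(X has_vector_derivative (A0 ** X (t - \<sigma>) + X (t - \<sigma>) ** A1 + G t)) (at t within {0..})"
      if t: "0 \<le> t" for t
    proof -
      have "(S has_vector_derivative (A0 ** S (t - \<sigma>) + S (t - \<sigma>) ** A1 + G t)) (at t within {0..})"
        using S t by (simp add: dde_solution_def)
      moreover have "S (t - \<sigma>) = X (t - \<sigma>)" using XS[of "t - \<sigma>"] t by simp
      ultimately have d: "(S has_vector_derivative (A0 ** X (t - \<sigma>) + X (t - \<sigma>) ** A1 + G t)) (at t within {0..})"
        by simp
      show ?thesis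
        by (rule has_vector_derivative_transform_within[OF d, of 1]) (use t XS assms(1) in auto)
    qed
    show "dde_solution A0 A1 \<sigma> G \<Psi> X" unfolding dde_solution_def using init der by blast
  qed
qed

end
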